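(* Let $\Omega$ be a finite set with at least two points, $\delta>0$, and $\rho(x,y)=\delta\,1_{\{x\neq y\}}$. Let $r\ge1$, $n\ge1$. (i) For every probability measure $P$ on $\Omega$, if $\hat P$ is the empirical distribution of $n$ i.i.d. samples from $P$, then $\mathbb E[W_r^r(P,\hat P)]\le\delta^r\sqrt{(|\Omega|-1)/n}$. (ii) If $|\Omega|\le 32n$, then $\inf_{\hat P}\sup_{P}\mathbb E[W_r^r(P,\hat P)]\ge c_r\,\delta^r\sqrt{(|\Omega|-1)/n}$ with $c_r=\frac{3\log2}{2^{r+12}}$, where the supremum is over all probability measures on $\Omega$ and the infimum over all (possibly randomized) estimators $\hat P:\Omega^n\to\{\text{probability measures on }\Omega\}$.
   Context: $W_r(P,Q):=\inf_{\mu\in\Pi(P,Q)}\big(\mathbb E_{(X,Y)\sim\mu}[\rho^r(X,Y)]\big)^{1/r}$ with $\Pi(P,Q)$ the set of couplings. The empirical distribution is $\hat P(S)=\frac1n\sum_{i=1}^n1_{\{X_i\in S\}}$. *)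

theory Defs
  imports "HOL-Probability.Probability"
begin

definition couplings :: "'a pmf \<Rightarrow> 'b pmf \<Rightarrow> ('a \<times> 'b) pmf set" where
  "couplings P Q = {\<mu>. map_pmf fst \<mu> = P \<and> map_pmf snd \<mu> = Q}"

definition wasserstein :: "('a \<Rightarrow> 'a \<Rightarrow> real) \<Rightarrow> real \<Rightarrow> 'a pmf \<Rightarrow> 'a pmf \<Rightarrow> real" where
  "wasserstein \<rho> r P Q =
     (INF \<mu> \<in> couplings P Q. measure_pmf.expectation \<mu> (\<lambda>(x, y). \<rho> x y powr r)) powr (1 / r)"

definition hamming_metric :: "real \<Rightarrow> 'a \<Rightarrow> 'a \<Rightarrow> real" where
  "hamming_metric \<delta> x y = (if x \<noteq> y then \<delta> else 0)"

definition empirical :: "'a list \<Rightarrow> 'a pmf" where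
  "empirical xs = map_pmf (\<lambda>i. xs ! i) (pmf_of_set {..<length xs})"

definition risk :: "('a \<Rightarrow> 'a \<Rightarrow> real) \<Rightarrow> real \<Rightarrow> nat \<Rightarrow> ('a list \<Rightarrow> 'a pmf pmf) \<Rightarrow> 'a pmf \<Rightarrow> real" where
  "risk \<rho> r n est P =
     measure_pmf.expectation (replicate_pmf n P)
       (\<lambda>xs. measure_pmf.expectation (est xs) (\<lambda>Q. wasserstein \<rho> r P Q powr r))"

end

theory Submission
  imports Defs
begin


definition Ls :: "nat \<Rightarrow> 'a list set" where "Ls n = {xs. length xs = n}"

lemma finite_Ls: "finite (Ls n :: ('a::finite) list set)"
proof -
  have "Ls n = {xs::'a list. set xs \<subseteq> UNIV \<and> length xs = n}" by (auto simp: Ls_def)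
  thus ?thesis using finite_lists_length_eq[of "UNIV::'a set" n] by simp
qed

lemma sum_Ls_Suc:
  fixes g :: "'a::finite list \<Rightarrow> real"
  shows "(\<Sum>xs\<in>Ls (Suc n). g xs) = (\<Sum>x\<in>UNIV. \<Sum>xs\<in>Ls n. g (x#xs))"
proof -
  have bij: "bij_betw (\<lambda>(x,xs). x#xs) (UNIV \<times> Ls n) (Ls (Suc n))"
    unfolding bij_betw_def inj_on_def Ls_def
    by (auto simp: length_Suc_conv image_iff)
  have "(\<Sum>xs\<in>Ls (Suc n). g xs) = (\<Sum>z\<in>UNIV \<times> Ls n. g ((\<lambda>(x,xs). x#xs) z))"
    using sum.reindex_bij_betw[OF bij, of g] by simp
  also have "\<dots> = (\<Sum>x\<in>UNIV. \<Sum>xs\<in>Ls n. g (x#xs))"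
    by (simp add: sum.cartesian_product split_def)
  finally show ?thesis .
qed

lemma replicate_pmf_Suc':
  "replicate_pmf (Suc n) p = map_pmf (\<lambda>(x,xs). x#xs) (pair_pmf p (replicate_pmf n p))"
  by (simp add: pair_pmf_def map_pmf_def bind_assoc_pmf bind_return_pmf)

lemma pmf_replicate:
  "pmf (replicate_pmf n p) xs = (if length xs = n then prod_list (map (pmf p) xs) else 0)"
proof (induction n arbitrary: xs)
  case 0
  then show ?case by (auto simp: pmf_return indicator_def)
next
  case (Suc n)
  show ?case
  proof (cases xs)
    case Nil
    have "xs \<notin> set_pmf (replicate_pmf (Suc n) p)" using Nil by (simp add: set_replicate_pmf)
    then show ?thesis using Nil by (simp only: set_pmf_iff) simp
  next
    case (Cons y ys)
    have inj: "inj (\<lambda>(x::'a,xs). x#xs)" by (auto simp: inj_def)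
    have "pmf (replicate_pmf (Suc n) p) xs = pmf (pair_pmf p (replicate_pmf n p)) (y,ys)"
      using pmf_map_inj'[OF inj, of "pair_pmf p (replicate_pmf n p)" "(y,ys)"] Cons
      by (simp only: replicate_pmf_Suc') simp
    also have "\<dots> = pmf p y * pmf (replicate_pmf n p) ys" by (simp add: pmf_pair)
    finally show ?thesis using Suc Cons by simp
  qed
qed

definition wl :: "'a pmf \<Rightarrow> 'a list \<Rightarrow> real" where
  "wl p xs = prod_list (map (pmf p) xs)"

lemma wl_Cons[simp]: "wl p (x#xs) = pmf p x * wl p xs" by (simp add: wl_def)
lemma wl_nonneg: "wl p xs \<ge> 0" unfolding wl_def by (induction xs) auto

lemma expectation_replicate:
  fixes f :: "'a::finite list \<Rightarrow> real"
  shows "measure_pmf.expectation (replicate_pmf n p) f = (\<Sum>xs\<in>Ls n. wl p xs * f xs)"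
proof -
  have "measure_pmf.expectation (replicate_pmf n p) f = (\<Sum>xs\<in>Ls n. f xs * pmf (replicate_pmf n p) xs)"
    by (rule integral_measure_pmf_real) (use finite_Ls[of n] in \<open>auto simp: set_replicate_pmf Ls_def\<close>)
  also have "\<dots> = (\<Sum>xs\<in>Ls n. wl p xs * f xs)"
    by (rule sum.cong) (auto simp: pmf_replicate wl_def Ls_def)
  finally show ?thesis .
qed

lemma sum_pmf_UNIV: "(\<Sum>x\<in>(UNIV::'a::finite set). pmf p x) = 1"
  by (rule sum_pmf_eq_1) auto

lemma sum_wl: "(\<Sum>xs\<in>Ls n. wl (p::'a::finite pmf) xs) = 1"
proof (induction n)
  case 0
  have "Ls 0 = {[]::'a list}" by (auto simp: Ls_def)
  then show ?case by (simp add: wl_def)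
next
  case (Suc n)
  have "(\<Sum>xs\<in>Ls (Suc n). wl p xs) = (\<Sum>x\<in>UNIV. pmf p x * (\<Sum>xs\<in>Ls n. wl p xs))"
    by (simp add: sum_Ls_Suc sum_distrib_left)
  then show ?case using Suc by (simp add: sum_pmf_UNIV)
qed




definition tv :: "'a::finite pmf \<Rightarrow> 'a pmf \<Rightarrow> real" where
  "tv p q = 1 - (\<Sum>x\<in>UNIV. min (pmf p x) (pmf q x))"

lemma tv_abs: "tv p q = (\<Sum>x\<in>UNIV. \<bar>pmf p x - pmf q x\<bar>) / 2"
proof -
  have "(\<Sum>x\<in>UNIV. \<bar>pmf p x - pmf q x\<bar>) = (\<Sum>x\<in>UNIV. pmf p x + pmf q x - 2 * min (pmf p x) (pmf q x))"
    by (rule sum.cong) auto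
  also have "\<dots> = 2 - 2 * (\<Sum>x\<in>UNIV. min (pmf p x) (pmf q x))"
    by (simp add: sum.distrib sum_subtractf sum_distrib_left[symmetric] sum_pmf_UNIV)
  finally show ?thesis by (simp add: tv_def)
qed

lemma tv_nonneg: "tv p q \<ge> 0" by (simp add: tv_abs sum_nonneg)

lemma tv_le1: "tv p q \<le> 1"
  unfolding tv_def by (simp add: sum_nonneg)

lemma sum_diag:
  fixes f :: "'a::finite \<times> 'a \<Rightarrow> real"
  shows "(\<Sum>z\<in>UNIV. if fst z = snd z then f z else 0) = (\<Sum>x\<in>UNIV. f (x,x))"
proof -
  have "(\<Sum>z\<in>UNIV. if fst z = snd z then f z else 0) = (\<Sum>z\<in>range (\<lambda>x. (x,x)). f z)"
    by (rule sum.mono_neutral_cong_right) auto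
  also have "\<dots> = (\<Sum>x\<in>UNIV. f (x,x))"
    by (subst sum.reindex) (auto simp: inj_def)
  finally show ?thesis .
qed

lemma exp_cost:
  fixes \<mu> :: "('a::finite \<times> 'a) pmf"
  assumes "\<delta> \<ge> 0"
  shows "measure_pmf.expectation \<mu> (\<lambda>(x, y). hamming_metric \<delta> x y powr r)
          = \<delta> powr r * (1 - (\<Sum>x\<in>UNIV. pmf \<mu> (x,x)))"
proof -
  have "measure_pmf.expectation \<mu> (\<lambda>(x, y). hamming_metric \<delta> x y powr r)
      = (\<Sum>z\<in>UNIV. (\<lambda>(x, y). hamming_metric \<delta> x y powr r) z * pmf \<mu> z)"
    by (rule integral_measure_pmf_real) auto
  also have "\<dots> = (\<Sum>z\<in>UNIV. \<delta> powr r * pmf \<mu> z - \<delta> powr r * (if fst z = snd z then pmf \<mu> z else 0))"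
    by (rule sum.cong) (auto simp: hamming_metric_def split: prod.splits)
  also have "\<dots> = \<delta> powr r * (\<Sum>z\<in>UNIV. pmf \<mu> z) - \<delta> powr r * (\<Sum>z\<in>UNIV. (if fst z = snd z then pmf \<mu> z else 0))"
    by (simp add: sum_subtractf sum_distrib_left)
  also have "\<dots> = \<delta> powr r * (1 - (\<Sum>x\<in>UNIV. pmf \<mu> (x,x)))"
    by (simp add: sum_diag sum_pmf_UNIV algebra_simps)
  finally show ?thesis .
qed

lemma diag_le_fst: "pmf \<mu> (x,x) \<le> pmf (map_pmf fst \<mu>) x"
proof -
  have "pmf (map_pmf fst \<mu>) x = measure_pmf.prob \<mu> (fst -` {x})" by (simp add: pmf_map)
  moreover have "measure_pmf.prob \<mu> {(x,x)} \<le> measure_pmf.prob \<mu> (fst -` {x})"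
    by (rule measure_pmf.finite_measure_mono) auto
  ultimately show ?thesis by (simp add: measure_pmf_single)
qed

lemma diag_le_snd: "pmf \<mu> (x,x) \<le> pmf (map_pmf snd \<mu>) x"
proof -
  have "pmf (map_pmf snd \<mu>) x = measure_pmf.prob \<mu> (snd -` {x})" by (simp add: pmf_map)
  moreover have "measure_pmf.prob \<mu> {(x,x)} \<le> measure_pmf.prob \<mu> (snd -` {x})"
    by (rule measure_pmf.finite_measure_mono) auto
  ultimately show ?thesis by (simp add: measure_pmf_single)
qed

lemma coupling_lower:
  assumes "\<mu> \<in> couplings p q"
  shows "(\<Sum>x\<in>UNIV. pmf \<mu> (x,x)) \<le> (\<Sum>x\<in>(UNIV::'a::finite set). min (pmf p x) (pmf q x))"
  using assms diag_le_fst[of \<mu>] diag_le_snd[of \<mu>]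
  by (intro sum_mono) (auto simp: couplings_def)

lemma max_coupling:
  fixes p q :: "'a::finite pmf"
  shows "\<exists>\<mu>\<in>couplings p q. (\<Sum>x\<in>UNIV. pmf \<mu> (x,x)) = (\<Sum>x\<in>UNIV. min (pmf p x) (pmf q x))"
proof -
  define m where "m x = min (pmf p x) (pmf q x)" for x
  define d where "d = 1 - (\<Sum>x\<in>UNIV. m x)"
  define f where "f z = (if fst z = snd z then m (fst z) else 0)
       + (pmf p (fst z) - m (fst z)) * (pmf q (snd z) - m (snd z)) / d" for z
  have dp: "(\<Sum>x\<in>UNIV. pmf p x - m x) = d" by (simp add: d_def sum_subtractf sum_pmf_UNIV)
  have dq: "(\<Sum>x\<in>UNIV. pmf q x - m x) = d" by (simp add: d_def sum_subtractf sum_pmf_UNIV)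
  have pm: "pmf p x - m x \<ge> 0" "pmf q x - m x \<ge> 0" for x by (auto simp: m_def)
  have d0: "d \<ge> 0" using dp pm by (metis sum_nonneg)
  have zp: "pmf p x - m x = 0" "pmf q x - m x = 0" if "d = 0" for x
  proof -
    have "\<forall>x\<in>UNIV. pmf p x - m x = 0"
      using sum_nonneg_eq_0_iff[of UNIV "\<lambda>x. pmf p x - m x"] dp pm that by simp
    moreover have "\<forall>x\<in>UNIV. pmf q x - m x = 0"
      using sum_nonneg_eq_0_iff[of UNIV "\<lambda>x. pmf q x - m x"] dq pm that by simp
    ultimately show "pmf p x - m x = 0" "pmf q x - m x = 0" by auto
  qed
  have fnn: "f z \<ge> 0" for z
    unfolding f_def using pm d0 by (auto intro!: add_nonneg_nonneg divide_nonneg_nonneg simp: m_def)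
  have row: "(\<Sum>y\<in>UNIV. f (x,y)) = pmf p x" for x
  proof -
    have "(\<Sum>y\<in>UNIV. f (x,y)) = (\<Sum>y\<in>UNIV. (if x = y then m x else 0))
          + (pmf p x - m x) * (\<Sum>y\<in>UNIV. pmf q y - m y) / d"
      unfolding f_def by (simp add: sum.distrib sum_divide_distrib[symmetric] sum_distrib_left)
    also have "\<dots> = m x + (pmf p x - m x) * d / d" by (simp add: dq)
    also have "\<dots> = pmf p x" using zp[of x] by (cases "d = 0") auto
    finally show ?thesis .
  qed
  have col: "(\<Sum>x\<in>UNIV. f (x,y)) = pmf q y" for y
  proof -
    have "(\<Sum>x\<in>UNIV. f (x,y)) = (\<Sum>x\<in>UNIV. (if x = y then m y else 0))
          + (\<Sum>x\<in>UNIV. pmf p x - m x) * (pmf q y - m y) / d"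
      unfolding f_def by (simp add: sum.distrib sum_divide_distrib[symmetric] sum_distrib_right)
    also have "\<dots> = m y + d * (pmf q y - m y) / d" by (simp add: dp)
    also have "\<dots> = pmf q y" using zp[of y] by (cases "d = 0") auto
    finally show ?thesis .
  qed
  have tot: "(\<Sum>z\<in>UNIV. f z) = 1"
  proof -
    have "(\<Sum>z\<in>UNIV. f z) = (\<Sum>x\<in>UNIV. \<Sum>y\<in>UNIV. f (x,y))"
      by (simp add: sum.cartesian_product)
    also have "\<dots> = 1" by (simp add: row sum_pmf_UNIV)
    finally show ?thesis .
  qed
  define \<mu> where "\<mu> = embed_pmf f"
  have pmu: "pmf \<mu> z = f z" for z
    unfolding \<mu>_def
  proof (rule pmf_embed_pmf)
    show "0 \<le> f x" for x by (rule fnn)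
    show "(\<integral>\<^sup>+ x. ennreal (f x) \<partial>count_space UNIV) = 1"
      by (simp add: nn_integral_count_space_finite sum_ennreal fnn tot del: sum_ennreal[symmetric])
  qed
  have m1: "map_pmf fst \<mu> = p"
  proof (rule pmf_eqI)
    fix x
    have "pmf (map_pmf fst \<mu>) x = measure_pmf.prob \<mu> (fst -` {x})" by (simp add: pmf_map)
    also have "\<dots> = (\<Sum>z\<in>{x} \<times> UNIV. f z)"
      by (subst measure_measure_pmf_finite) (auto simp: pmu intro!: sum.cong)
    also have "\<dots> = (\<Sum>a\<in>{x}. \<Sum>y\<in>UNIV. f (a,y))"
      by (subst sum.cartesian_product) (simp add: split_def)
    also have "\<dots> = pmf p x" by (simp add: row)
    finally show "pmf (map_pmf fst \<mu>) x = pmf p x" .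
  qed
  have m2: "map_pmf snd \<mu> = q"
  proof (rule pmf_eqI)
    fix y
    have "pmf (map_pmf snd \<mu>) y = measure_pmf.prob \<mu> (snd -` {y})" by (simp add: pmf_map)
    also have "\<dots> = (\<Sum>z\<in>UNIV \<times> {y}. f z)"
      by (subst measure_measure_pmf_finite) (auto simp: pmu intro!: sum.cong)
    also have "\<dots> = (\<Sum>a\<in>UNIV. \<Sum>b\<in>{y}. f (a,b))"
      by (subst sum.cartesian_product) (simp add: split_def)
    also have "\<dots> = pmf q y" by (simp add: col)
    finally show "pmf (map_pmf snd \<mu>) y = pmf q y" .
  qed
  have "(\<Sum>x\<in>UNIV. pmf \<mu> (x,x)) = (\<Sum>x\<in>UNIV. m x)"
  proof (rule sum.cong)
    fix x
    have "(pmf p x - m x) * (pmf q x - m x) = 0" by (auto simp: m_def min_def)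
    then show "pmf \<mu> (x,x) = m x" by (simp add: pmu f_def)
  qed simp
  then show ?thesis using m1 m2 by (auto simp: couplings_def m_def)
qed

lemma W_pow:
  fixes p q :: "'a::finite pmf"
  assumes "\<delta> \<ge> 0" "r > 0"
  shows "wasserstein (hamming_metric \<delta>) r p q powr r = \<delta> powr r * tv p q"
proof -
  let ?g = "\<lambda>\<mu>. measure_pmf.expectation \<mu> (\<lambda>(x, y). hamming_metric \<delta> x y powr r)"
  have low: "?g \<mu> \<ge> \<delta> powr r * tv p q" if "\<mu> \<in> couplings p q" for \<mu>
    using coupling_lower[OF that] unfolding exp_cost[OF assms(1)] tv_def
    by (intro mult_left_mono) auto
  obtain \<mu>0 where mu0: "\<mu>0 \<in> couplings p q"
    "(\<Sum>x\<in>UNIV. pmf \<mu>0 (x,x)) = (\<Sum>x\<in>UNIV. min (pmf p x) (pmf q x))"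
    using max_coupling by blast
  have g0: "?g \<mu>0 = \<delta> powr r * tv p q" by (simp add: exp_cost[OF assms(1)] mu0(2) tv_def)
  have inf: "(INF \<mu> \<in> couplings p q. ?g \<mu>) = \<delta> powr r * tv p q"
  proof (rule antisym)
    have "bdd_below (?g ` couplings p q)" using low by (auto simp: bdd_below_def)
    then have "(INF \<mu> \<in> couplings p q. ?g \<mu>) \<le> ?g \<mu>0" by (rule cINF_lower[OF _ mu0(1)])
    then show "(INF \<mu> \<in> couplings p q. ?g \<mu>) \<le> \<delta> powr r * tv p q" using g0 by simp
    show "\<delta> powr r * tv p q \<le> (INF \<mu> \<in> couplings p q. ?g \<mu>)"
      using mu0(1) low by (intro cINF_greatest) auto
  qed
  have nn: "\<delta> powr r * tv p q \<ge> 0" by (simp add: tv_nonneg)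
  show ?thesis unfolding wasserstein_def inf
    using assms nn by (simp add: powr_powr)
qed




definition Yv :: "'a pmf \<Rightarrow> 'a \<Rightarrow> 'a list \<Rightarrow> real" where
  "Yv p a xs = real (count_list xs a) - real (length xs) * pmf p a"

definition Iv :: "'a pmf \<Rightarrow> 'a \<Rightarrow> 'a \<Rightarrow> real" where
  "Iv p a x = (if x = a then 1 else 0) - pmf p a"

lemma Yv_Cons: "Yv p a (x#xs) = Iv p a x + Yv p a xs"
  by (simp add: Yv_def Iv_def algebra_simps)

lemma sumI0: "(\<Sum>x\<in>(UNIV::'a::finite set). pmf p x * Iv p a x) = 0"
proof -
  have "(\<Sum>x\<in>(UNIV::'a set). pmf p x * Iv p a x)
        = (\<Sum>x\<in>UNIV. (if x = a then pmf p a else 0) - pmf p x * pmf p a)"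
    by (rule sum.cong) (auto simp: Iv_def algebra_simps)
  also have "\<dots> = pmf p a - (\<Sum>x\<in>UNIV. pmf p x) * pmf p a"
    by (simp add: sum_subtractf sum_distrib_right)
  also have "\<dots> = 0" by (simp add: sum_pmf_UNIV)
  finally show ?thesis .
qed

lemma sumI2: "(\<Sum>x\<in>(UNIV::'a::finite set). pmf p x * (Iv p a x)^2)
    = pmf p a * (1 - pmf p a)"
proof -
  have "(\<Sum>x\<in>(UNIV::'a set). pmf p x * (Iv p a x)^2)
        = (\<Sum>x\<in>UNIV. (if x = a then pmf p a * (1 - 2 * pmf p a) else 0) + pmf p x * (pmf p a)^2)"
    by (rule sum.cong) (auto simp: Iv_def algebra_simps power2_eq_square)
  also have "\<dots> = pmf p a * (1 - 2 * pmf p a) + (\<Sum>x\<in>UNIV. pmf p x) * (pmf p a)^2"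
    by (simp add: sum.distrib sum_distrib_right)
  also have "\<dots> = pmf p a * (1 - pmf p a)" by (simp add: sum_pmf_UNIV power2_eq_square algebra_simps)
  finally show ?thesis .
qed

lemma M1: "(\<Sum>xs\<in>Ls n. wl (p::'a::finite pmf) xs * Yv p a xs) = 0"
proof (induction n)
  case 0
  have "Ls 0 = {[]::'a list}" by (auto simp: Ls_def)
  then show ?case by (simp add: Yv_def)
next
  case (Suc n)
  have step: "(\<Sum>xs\<in>Ls n. wl p (x#xs) * Yv p a (x#xs))
      = pmf p x * Iv p a x * (\<Sum>xs\<in>Ls n. wl p xs) + pmf p x * (\<Sum>xs\<in>Ls n. wl p xs * Yv p a xs)" for x
    by (simp add: Yv_Cons sum_distrib_left sum.distrib algebra_simps)
  have "(\<Sum>xs\<in>Ls (Suc n). wl p xs * Yv p a xs)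
      = (\<Sum>x\<in>UNIV. pmf p x * Iv p a x * (\<Sum>xs\<in>Ls n. wl p xs) + pmf p x * (\<Sum>xs\<in>Ls n. wl p xs * Yv p a xs))"
    by (simp only: sum_Ls_Suc step)
  also have "\<dots> = 0" using Suc by (simp add: sum_wl sumI0)
  finally show ?case .
qed

lemma M2: "(\<Sum>xs\<in>Ls n. wl (p::'a::finite pmf) xs * (Yv p a xs)^2) = real n * (pmf p a * (1 - pmf p a))"
proof (induction n)
  case 0
  have "Ls 0 = {[]::'a list}" by (auto simp: Ls_def)
  then show ?case by (simp add: Yv_def)
next
  case (Suc n)
  have step: "(\<Sum>xs\<in>Ls n. wl p (x#xs) * (Yv p a (x#xs))^2)
      = pmf p x * (Iv p a x)^2 * (\<Sum>xs\<in>Ls n. wl p xs)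
          + 2 * (pmf p x * Iv p a x) * (\<Sum>xs\<in>Ls n. wl p xs * Yv p a xs)
          + pmf p x * (\<Sum>xs\<in>Ls n. wl p xs * (Yv p a xs)^2)" for x
    by (simp add: Yv_Cons sum_distrib_left sum.distrib power2_eq_square algebra_simps)
  have "(\<Sum>xs\<in>Ls (Suc n). wl p xs * (Yv p a xs)^2)
      = (\<Sum>x\<in>UNIV. pmf p x * (Iv p a x)^2 * (\<Sum>xs\<in>Ls n. wl p xs)
          + 2 * (pmf p x * Iv p a x) * (\<Sum>xs\<in>Ls n. wl p xs * Yv p a xs)
          + pmf p x * (\<Sum>xs\<in>Ls n. wl p xs * (Yv p a xs)^2))"
    by (simp only: sum_Ls_Suc step)
  also have "\<dots> = (\<Sum>x\<in>UNIV. pmf p x * (Iv p a x)^2) + (\<Sum>x\<in>UNIV. pmf p x) * (real n * (pmf p a * (1 - pmf p a)))"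
    using Suc by (simp add: sum_wl M1 sum.distrib sum_distrib_right)
  also have "\<dots> = real (Suc n) * (pmf p a * (1 - pmf p a))"
    by (simp only: sumI2 sum_pmf_UNIV) (simp add: algebra_simps)
  finally show ?case .
qed

lemma abs_moment:
  fixes w Y :: "'b \<Rightarrow> real"
  assumes "\<And>x. w x \<ge> 0"
  shows "(\<Sum>x\<in>A. w x * \<bar>Y x\<bar>)^2 \<le> (\<Sum>x\<in>A. w x) * (\<Sum>x\<in>A. w x * (Y x)^2)"
proof -
  have "(\<Sum>x\<in>A. sqrt (w x) * (sqrt (w x) * \<bar>Y x\<bar>))^2
     \<le> (\<Sum>x\<in>A. (sqrt (w x))^2) * (\<Sum>x\<in>A. (sqrt (w x) * \<bar>Y x\<bar>)^2)"
    by (rule Cauchy_Schwarz_ineq_sum)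
  moreover have "sqrt (w x) * (sqrt (w x) * \<bar>Y x\<bar>) = w x * \<bar>Y x\<bar>" for x
    using assms[of x] by (simp add: mult.assoc[symmetric])
  moreover have "(sqrt (w x))^2 = w x" for x using assms[of x] by simp
  moreover have "(sqrt (w x) * \<bar>Y x\<bar>)^2 = w x * (Y x)^2" for x
    using assms[of x] by (simp add: power_mult_distrib)
  ultimately show ?thesis by simp
qed

lemma pmf_empirical:
  assumes "xs \<noteq> []"
  shows "pmf (empirical xs) a = real (count_list xs a) / real (length xs)"
proof -
  have "pmf (empirical xs) a = measure_pmf.prob (pmf_of_set {..<length xs}) ((\<lambda>i. xs ! i) -` {a})"
    by (simp add: empirical_def pmf_map)
  also have "\<dots> = real (card ({..<length xs} \<inter> (\<lambda>i. xs ! i) -` {a})) / real (length xs)"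
    using assms by (subst measure_pmf_of_set) auto
  also have "{..<length xs} \<inter> (\<lambda>i. xs ! i) -` {a} = {i. i < length xs \<and> a = xs ! i}" by auto
  finally show ?thesis by (simp add: count_list_eq_length_filter length_filter_conv_card)
qed

lemma part1:
  fixes P :: "'a::finite pmf"
  assumes card: "CARD('a) \<ge> 2" and delta: "\<delta> > 0" and r: "r \<ge> 1" and n: "n \<ge> 1"
  shows "measure_pmf.expectation (replicate_pmf n P)
              (\<lambda>xs. wasserstein (hamming_metric \<delta>) r P (empirical xs) powr r)
            \<le> \<delta> powr r * sqrt ((real CARD('a) - 1) / real n)"
proof -
  let ?k = "real CARD('a)"
  have "measure_pmf.expectation (replicate_pmf n P)
              (\<lambda>xs. wasserstein (hamming_metric \<delta>) r P (empirical xs) powr r)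
       = (\<Sum>xs\<in>Ls n. wl P xs * (\<delta> powr r * tv P (empirical xs)))"
    unfolding expectation_replicate using delta r by (intro sum.cong refl) (simp add: W_pow)
  also have "\<dots> = \<delta> powr r * (\<Sum>xs\<in>Ls n. wl P xs * tv P (empirical xs))"
    by (subst sum_distrib_left) (simp add: mult.left_commute)
  also have "(\<Sum>xs\<in>Ls n. wl P xs * tv P (empirical xs))
      = (\<Sum>xs\<in>Ls n. wl P xs * ((\<Sum>a\<in>UNIV. \<bar>Yv P a xs\<bar>) / (2 * real n)))"
  proof (rule sum.cong)
    fix xs :: "'a list" assume xs: "xs \<in> Ls n"
    then have len: "length xs = n" by (simp add: Ls_def)
    with n have ne: "xs \<noteq> []" by auto
    have "\<bar>pmf P a - pmf (empirical xs) a\<bar> = \<bar>Yv P a xs\<bar> / real n" for a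
    proof -
      have "pmf P a - pmf (empirical xs) a = - (Yv P a xs / real n)"
        using n len by (simp add: pmf_empirical[OF ne] Yv_def field_simps)
      then show ?thesis by simp
    qed
    then show "wl P xs * tv P (empirical xs) = wl P xs * ((\<Sum>a\<in>UNIV. \<bar>Yv P a xs\<bar>) / (2 * real n))"
      by (simp add: tv_abs sum_divide_distrib mult.commute)
  qed simp
  also have "\<dots> = (\<Sum>a\<in>UNIV. \<Sum>xs\<in>Ls n. wl P xs * \<bar>Yv P a xs\<bar>) / (2 * real n)"
    by (subst sum.swap) (simp add: sum_divide_distrib sum_distrib_left)
  also have "\<dots> \<le> sqrt ((?k - 1) / real n)"
  proof -
    define S where "S = (\<Sum>a\<in>(UNIV::'a set). \<Sum>xs\<in>Ls n. wl P xs * \<bar>Yv P a xs\<bar>)"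
    have Snn: "S \<ge> 0" unfolding S_def by (intro sum_nonneg mult_nonneg_nonneg wl_nonneg) auto
    have each: "(\<Sum>xs\<in>Ls n. wl P xs * \<bar>Yv P a xs\<bar>)^2 \<le> real n * (pmf P a * (1 - pmf P a))" for a
      using abs_moment[where w="wl P" and A="Ls n" and Y="Yv P a"] by (simp add: wl_nonneg sum_wl M2)
    have "S^2 = (\<Sum>a\<in>(UNIV::'a set). 1 * (\<Sum>xs\<in>Ls n. wl P xs * \<bar>Yv P a xs\<bar>))^2" by (simp add: S_def)
    also have "\<dots> \<le> (\<Sum>a\<in>(UNIV::'a set). 1^2) * (\<Sum>a\<in>UNIV. (\<Sum>xs\<in>Ls n. wl P xs * \<bar>Yv P a xs\<bar>)^2)"
      by (rule Cauchy_Schwarz_ineq_sum)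
    also have "\<dots> \<le> ?k * (\<Sum>a\<in>(UNIV::'a set). real n * pmf P a)"
    proof -
      have "(\<Sum>a\<in>UNIV. (\<Sum>xs\<in>Ls n. wl P xs * \<bar>Yv P a xs\<bar>)^2) \<le> (\<Sum>a\<in>(UNIV::'a set). real n * pmf P a)"
      proof (rule sum_mono)
        fix a
        have "real n * (pmf P a * (1 - pmf P a)) \<le> real n * pmf P a"
          by (intro mult_left_mono) (auto simp: pmf_le_1 mult_left_le)
        then show "(\<Sum>xs\<in>Ls n. wl P xs * \<bar>Yv P a xs\<bar>)^2 \<le> real n * pmf P a"
          using each[of a] by linarith
      qed
      moreover have "(\<Sum>a\<in>(UNIV::'a set). (1::real)^2) = ?k" by simp
      ultimately show ?thesis using mult_left_mono[of _ _ ?k] by simp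
    qed
    also have "\<dots> = ?k * real n" by (simp add: sum_distrib_left[symmetric] sum_pmf_UNIV)
    finally have S2: "S^2 \<le> ?k * real n" .
    have "(S / (2 * real n))^2 = S^2 / (4 * (real n)^2)" by (simp add: power_divide power_mult_distrib)
    also have "\<dots> \<le> ?k * real n / (4 * (real n)^2)"
      using S2 n by (intro divide_right_mono) auto
    also have "\<dots> = ?k / (4 * real n)" using n by (simp add: power2_eq_square field_simps)
    also have "\<dots> \<le> (?k - 1) / real n" using card n by (simp add: field_simps)
    finally show ?thesis unfolding S_def[symmetric] by (rule real_le_rsqrt)
  qed
  finally show ?thesis
    by (simp add: mult_left_mono)
qed




definition ee' :: "'a::finite \<Rightarrow> nat" where "ee' = to_nat_on (UNIV::'a set)"
definition ee :: "nat \<Rightarrow> 'a::finite" where "ee = inv_into UNIV ee'"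

lemma bij_ee': "bij_betw (ee' :: 'a::finite \<Rightarrow> nat) UNIV {..<CARD('a)}"
  unfolding ee'_def by (rule to_nat_on_finite) simp

lemma bij_ee: "bij_betw (ee :: nat \<Rightarrow> 'a::finite) {..<CARD('a)} UNIV"
  unfolding ee_def using bij_betw_inv_into[OF bij_ee'] .

lemma ee'_ee: "i < CARD('a) \<Longrightarrow> ee' (ee i :: 'a::finite) = i"
  unfolding ee_def by (rule bij_betw_inv_into_right[OF bij_ee']) simp

lemma sum_ee': "(\<Sum>x\<in>(UNIV::'a::finite set). g (ee' x)) = (\<Sum>i<CARD('a). g i)"
  using sum.reindex_bij_betw[OF bij_ee', of g] .

lemma sum_ee: "(\<Sum>x\<in>(UNIV::'a::finite set). h x) = (\<Sum>i<CARD('a). h (ee i))"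
  using sum.reindex_bij_betw[OF bij_ee, of h] by simp

lemma sum_pairs: "(\<Sum>i<2*(m::nat). (g i :: 'b::comm_monoid_add)) = (\<Sum>j<m. g (2*j) + g (Suc (2*j)))"
  by (induction m) (simp_all add: sum.lessThan_Suc add.assoc)

definition vv :: "real \<Rightarrow> nat \<Rightarrow> bool \<Rightarrow> real" where
  "vv \<epsilon> m s = (if s then 1 + \<epsilon> else 1 - \<epsilon>) / (2 * real m)"

definition ps :: "real \<Rightarrow> nat \<Rightarrow> nat set \<Rightarrow> nat \<Rightarrow> real" where
  "ps \<epsilon> m S i = (if i < 2*m then (if even i then vv \<epsilon> m (i div 2 \<in> S) else vv \<epsilon> m (i div 2 \<notin> S)) else 0)"

lemma ps_even: "j < m \<Longrightarrow> ps \<epsilon> m S (2*j) = vv \<epsilon> m (j \<in> S)"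
  by (simp add: ps_def)
lemma ps_odd: "j < m \<Longrightarrow> ps \<epsilon> m S (Suc (2*j)) = vv \<epsilon> m (j \<notin> S)"
  by (simp add: ps_def)

lemma vv_nonneg: "0 \<le> \<epsilon> \<Longrightarrow> \<epsilon> \<le> 1 \<Longrightarrow> vv \<epsilon> m s \<ge> 0"
  by (simp add: vv_def)
lemma vv_le1: 
  assumes "0 \<le> \<epsilon>" "\<epsilon> \<le> 1" "m \<ge> 1" shows "vv \<epsilon> m s \<le> 1"
proof -
  have "(if s then 1 + \<epsilon> else 1 - \<epsilon>) \<le> 2 * real m" using assms by auto
  then show ?thesis using assms by (simp add: vv_def divide_le_eq)
qed
lemma ps_nonneg: "0 \<le> \<epsilon> \<Longrightarrow> \<epsilon> \<le> 1 \<Longrightarrow> ps \<epsilon> m S i \<ge> 0"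
  by (simp add: ps_def vv_nonneg)

lemma vv_pair: "m \<ge> 1 \<Longrightarrow> vv \<epsilon> m s + vv \<epsilon> m (\<not> s) = 1 / real m"
  by (cases s) (auto simp: vv_def field_simps)

lemma sum_ps:
  assumes "m \<ge> 1" "2*m \<le> K"
  shows "(\<Sum>i<K. ps \<epsilon> m S i) = 1"
proof -
  have "(\<Sum>i<K. ps \<epsilon> m S i) = (\<Sum>i<2*m. ps \<epsilon> m S i)"
    using assms by (intro sum.mono_neutral_right) (auto simp: ps_def)
  also have "\<dots> = (\<Sum>j<m. vv \<epsilon> m (j \<in> S) + vv \<epsilon> m (j \<notin> S))"
    by (simp add: sum_pairs ps_even ps_odd)
  also have "\<dots> = (\<Sum>j<m. 1 / real m)" using assms by (simp add: vv_pair)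
  also have "\<dots> = 1" using assms by simp
  finally show ?thesis .
qed

definition PS :: "real \<Rightarrow> nat \<Rightarrow> nat set \<Rightarrow> 'a::finite pmf" where
  "PS \<epsilon> m S = embed_pmf (\<lambda>x. ps \<epsilon> m S (ee' x))"

lemma pmf_PS:
  assumes "m \<ge> 1" "2*m \<le> CARD('a)" "0 \<le> \<epsilon>" "\<epsilon> \<le> 1"
  shows "pmf (PS \<epsilon> m S :: 'a::finite pmf) x = ps \<epsilon> m S (ee' x)"
  unfolding PS_def
proof (rule pmf_embed_pmf)
  show "0 \<le> ps \<epsilon> m S (ee' x)" for x using assms by (simp add: ps_nonneg)
  have "(\<Sum>x\<in>(UNIV::'a set). ps \<epsilon> m S (ee' x)) = (\<Sum>i<CARD('a). ps \<epsilon> m S i)"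
    by (rule sum_ee')
  then have "(\<Sum>x\<in>(UNIV::'a set). ps \<epsilon> m S (ee' x)) = 1"
    using sum_ps[OF assms(1,2)] by simp
  then show "(\<integral>\<^sup>+ x. ennreal (ps \<epsilon> m S (ee' x :: nat)) \<partial>count_space (UNIV :: 'a set)) = 1"
    using assms by (simp add: nn_integral_count_space_finite sum_ennreal ps_nonneg del: sum_ennreal[symmetric])
qed

lemma pmf_PS_ee:
  assumes "m \<ge> 1" "2*m \<le> CARD('a)" "0 \<le> \<epsilon>" "\<epsilon> \<le> 1" "i < CARD('a)"
  shows "pmf (PS \<epsilon> m S :: 'a::finite pmf) (ee i) = ps \<epsilon> m S i"
  using pmf_PS[OF assms(1-4)] ee'_ee[OF assms(5)] by simp

definition Lj :: "real \<Rightarrow> nat \<Rightarrow> nat \<Rightarrow> bool \<Rightarrow> 'a::finite pmf \<Rightarrow> real" where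
  "Lj \<epsilon> m j s Q = (\<bar>vv \<epsilon> m s - pmf Q (ee (2*j))\<bar> + \<bar>vv \<epsilon> m (\<not> s) - pmf Q (ee (2*j+1))\<bar>) / 2"

lemma tv_PS_ge:
  assumes "m \<ge> 1" "2*m \<le> CARD('a)" "0 \<le> \<epsilon>" "\<epsilon> \<le> 1"
  shows "tv (PS \<epsilon> m S :: 'a::finite pmf) Q \<ge> (\<Sum>j<m. Lj \<epsilon> m j (j \<in> S) Q)"
proof -
  let ?P = "PS \<epsilon> m S :: 'a pmf"
  have t1: "tv ?P Q = (\<Sum>i<CARD('a). \<bar>pmf ?P (ee i) - pmf Q (ee i)\<bar>) / 2"
    by (simp add: tv_abs sum_ee[of "\<lambda>x. \<bar>pmf ?P x - pmf Q x\<bar>"])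
  also have "\<dots> = (\<Sum>i<CARD('a). \<bar>ps \<epsilon> m S i - pmf Q (ee i)\<bar>) / 2"
    using pmf_PS_ee[OF assms] by simp
  finally have t1: "tv ?P Q = (\<Sum>i<CARD('a). \<bar>ps \<epsilon> m S i - pmf Q (ee i)\<bar>) / 2" .
  have t2: "(\<Sum>i<CARD('a). \<bar>ps \<epsilon> m S i - pmf Q (ee i)\<bar>) \<ge> (\<Sum>i<2*m. \<bar>ps \<epsilon> m S i - pmf Q (ee i)\<bar>)"
    using assms(2) by (intro sum_mono2) auto
  have t3: "(\<Sum>i<2*m. \<bar>ps \<epsilon> m S i - pmf Q (ee i)\<bar>) = (\<Sum>j<m. 2 * Lj \<epsilon> m j (j \<in> S) Q)"
    by (auto simp: sum_pairs ps_even ps_odd Lj_def intro!: sum.cong)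
  have t4: "(\<Sum>j<m. 2 * Lj \<epsilon> m j (j \<in> S) Q) = 2 * (\<Sum>j<m. Lj \<epsilon> m j (j \<in> S) Q)"
    by (simp add: sum_distrib_left)
  show ?thesis using t1 t2 t3 t4 by linarith
qed

lemma aux_half: "(d::real) \<le> a + b \<Longrightarrow> d \<le> c + e \<Longrightarrow> L = (a + b + (c + e)) / 2 \<Longrightarrow> d \<le> L"
  by simp

lemma Lj_pair:
  assumes "m \<ge> 1" "0 \<le> \<epsilon>"
  shows "Lj \<epsilon> m j True Q + Lj \<epsilon> m j False Q \<ge> \<epsilon> / real m"
proof -
  have d: "\<bar>vv \<epsilon> m True - vv \<epsilon> m False\<bar> = \<epsilon> / real m"
    using assms by (simp add: vv_def field_simps abs_if)
  have "\<bar>vv \<epsilon> m True - vv \<epsilon> m False\<bar> \<le> \<bar>vv \<epsilon> m True - pmf Q (ee (2*j))\<bar> + \<bar>vv \<epsilon> m False - pmf Q (ee (2*j))\<bar>"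
    by linarith
  moreover have "\<bar>vv \<epsilon> m True - vv \<epsilon> m False\<bar> \<le> \<bar>vv \<epsilon> m False - pmf Q (ee (2*j+1))\<bar> + \<bar>vv \<epsilon> m True - pmf Q (ee (2*j+1))\<bar>"
    by linarith
  moreover have "Lj \<epsilon> m j True Q + Lj \<epsilon> m j False Q =
     ((\<bar>vv \<epsilon> m True - pmf Q (ee (2*j))\<bar> + \<bar>vv \<epsilon> m False - pmf Q (ee (2*j))\<bar>)
      + (\<bar>vv \<epsilon> m False - pmf Q (ee (2*j+1))\<bar> + \<bar>vv \<epsilon> m True - pmf Q (ee (2*j+1))\<bar>)) / 2"
    by (simp add: Lj_def field_simps)
  ultimately have "\<bar>vv \<epsilon> m True - vv \<epsilon> m False\<bar> \<le> Lj \<epsilon> m j True Q + Lj \<epsilon> m j False Q"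
    by (rule aux_half)
  then show ?thesis using d by simp
qed

lemma Lj_bound:
  assumes "m \<ge> 1" "0 \<le> \<epsilon>" "\<epsilon> \<le> 1"
  shows "0 \<le> Lj \<epsilon> m j s Q" "Lj \<epsilon> m j s Q \<le> 2"
proof -
  have "vv \<epsilon> m s \<le> 1" "vv \<epsilon> m (\<not>s) \<le> 1" "vv \<epsilon> m s \<ge> 0" "vv \<epsilon> m (\<not>s) \<ge> 0"
    using assms by (auto simp: vv_le1 vv_nonneg)
  moreover have "pmf Q (ee (2*j)) \<le> 1" "pmf Q (ee (2*j+1)) \<le> 1" by (auto simp: pmf_le_1)
  moreover have "pmf Q (ee (2*j)) \<ge> 0" "pmf Q (ee (2*j+1)) \<ge> 0" by auto
  ultimately have "\<bar>vv \<epsilon> m s - pmf Q (ee (2*j))\<bar> \<le> 1" "\<bar>vv \<epsilon> m (\<not>s) - pmf Q (ee (2*j+1))\<bar> \<le> 1"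
    by (intro abs_leI; linarith)+
  then show "0 \<le> Lj \<epsilon> m j s Q" "Lj \<epsilon> m j s Q \<le> 2"
    unfolding Lj_def by auto
qed

lemma affinity_PS:
  assumes "m \<ge> 1" "2*m \<le> CARD('a)" "0 \<le> \<epsilon>" "\<epsilon> \<le> 1" "j < m" "j \<notin> S"
  shows "(\<Sum>x\<in>(UNIV::'a::finite set). sqrt (pmf (PS \<epsilon> m S :: 'a pmf) x * pmf (PS \<epsilon> m (insert j S) :: 'a pmf) x))
         \<ge> 1 - \<epsilon>^2 / real m"
proof -
  let ?K = "CARD('a)"
  define h where "h i = (if i = 2*j \<or> i = 2*j+1 then (1 - \<epsilon>^2) / (2 * real m) else ps \<epsilon> m S i)" for i
  have "(\<Sum>x\<in>(UNIV::'a set). sqrt (pmf (PS \<epsilon> m S :: 'a pmf) x * pmf (PS \<epsilon> m (insert j S) :: 'a pmf) x))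
      = (\<Sum>i<?K. sqrt (ps \<epsilon> m S i * ps \<epsilon> m (insert j S) i))"
    using pmf_PS[OF assms(1-4)] sum_ee'[of "\<lambda>i. sqrt (ps \<epsilon> m S i * ps \<epsilon> m (insert j S) i)"]
    by simp
  also have "\<dots> \<ge> (\<Sum>i<?K. h i)"
  proof (rule sum_mono)
    fix i
    show "h i \<le> sqrt (ps \<epsilon> m S i * ps \<epsilon> m (insert j S) i)"
    proof (cases "i = 2*j \<or> i = 2*j+1")
      case True
      then have "ps \<epsilon> m S i * ps \<epsilon> m (insert j S) i = (1 - \<epsilon>^2) / (2 * real m)^2"
        using assms(5,6) by (auto simp: ps_def vv_def power2_eq_square field_simps)
      moreover have "0 \<le> 1 - \<epsilon>^2" using assms(3,4) by (auto simp: abs_square_le_1)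
      ultimately have "sqrt (ps \<epsilon> m S i * ps \<epsilon> m (insert j S) i) = sqrt (1 - \<epsilon>^2) / (2 * real m)"
        by (intro real_sqrt_unique) (auto simp: power_divide)
      moreover have "1 - \<epsilon>^2 \<le> sqrt (1 - \<epsilon>^2)"
      proof (rule real_le_rsqrt)
        have "0 \<le> 1 - \<epsilon>^2" "1 - \<epsilon>^2 \<le> 1" using assms(3,4) by (auto simp: abs_square_le_1)
        then show "(1 - \<epsilon>^2)^2 \<le> 1 - \<epsilon>^2" by (simp add: power2_eq_square mult_left_le)
      qed
      ultimately show ?thesis using True assms(1) by (simp add: h_def divide_right_mono)
    next
      case False
      then have "i div 2 \<noteq> j" by auto
      then have "ps \<epsilon> m (insert j S) i = ps \<epsilon> m S i" by (simp add: ps_def)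
      then show ?thesis using False assms(3,4) by (simp add: h_def ps_nonneg)
    qed
  qed
  also have "(\<Sum>i<?K. h i) = (\<Sum>i<?K. ps \<epsilon> m S i) + (\<Sum>i<?K. h i - ps \<epsilon> m S i)"
    by (simp add: sum_subtractf)
  also have "(\<Sum>i<?K. h i - ps \<epsilon> m S i) = (\<Sum>i\<in>{2*j, 2*j+1}. h i - ps \<epsilon> m S i)"
    using assms(2,5) by (intro sum.mono_neutral_right) (auto simp: h_def)
  also have "\<dots> = 2 * ((1 - \<epsilon>^2) / (2 * real m)) - (vv \<epsilon> m False + vv \<epsilon> m True)"
    using assms(1,5,6) by (simp add: h_def ps_even ps_odd, simp add: vv_def field_simps)
  also have "\<dots> = - (\<epsilon>^2 / real m)"
    using assms(1) by (simp add: vv_def field_simps)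
  finally show ?thesis using sum_ps[OF assms(1,2)] by simp
qed

lemma affinity_rep:
  fixes p q :: "'a::finite pmf"
  shows "(\<Sum>xs\<in>Ls n. sqrt (wl p xs * wl q xs)) = (\<Sum>x\<in>UNIV. sqrt (pmf p x * pmf q x))^n"
proof (induction n)
  case 0
  have "Ls 0 = {[]::'a list}" by (auto simp: Ls_def)
  then show ?case by (simp add: wl_def)
next
  case (Suc n)
  have "(\<Sum>xs\<in>Ls (Suc n). sqrt (wl p xs * wl q xs))
      = (\<Sum>x\<in>UNIV. sqrt (pmf p x * pmf q x) * (\<Sum>xs\<in>Ls n. sqrt (wl p xs * wl q xs)))"
    by (simp add: sum_Ls_Suc sum_distrib_left real_sqrt_mult mult_ac)
  then show ?case using Suc by (simp add: sum_distrib_right[symmetric])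
qed

lemma hellinger_min:
  fixes a b :: "'b \<Rightarrow> real"
  assumes "finite A" "\<And>x. a x \<ge> 0" "\<And>x. b x \<ge> 0" "sum a A = 1" "sum b A = 1"
  shows "(\<Sum>x\<in>A. min (a x) (b x)) \<ge> (\<Sum>x\<in>A. sqrt (a x * b x))^2 / 2"
proof -
  have e: "sqrt (a x * b x) = sqrt (min (a x) (b x)) * sqrt (max (a x) (b x))" for x
    by (simp add: real_sqrt_mult[symmetric] min_def max_def mult.commute)
  have sq: "(sqrt (min (a x) (b x)))^2 = min (a x) (b x)" "(sqrt (max (a x) (b x)))^2 = max (a x) (b x)" for x
    using assms(2,3)[of x] by (auto simp: min_def max_def)
  have "(\<Sum>x\<in>A. sqrt (a x * b x))^2 \<le> (\<Sum>x\<in>A. (sqrt (min (a x) (b x)))^2) * (\<Sum>x\<in>A. (sqrt (max (a x) (b x)))^2)"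
    unfolding e by (rule Cauchy_Schwarz_ineq_sum)
  also have "\<dots> = (\<Sum>x\<in>A. min (a x) (b x)) * (\<Sum>x\<in>A. max (a x) (b x))"
    by (simp add: sq)
  also have "(\<Sum>x\<in>A. max (a x) (b x)) \<le> 2"
  proof -
    have "(\<Sum>x\<in>A. max (a x) (b x)) \<le> (\<Sum>x\<in>A. a x + b x)"
      using assms(2,3) by (intro sum_mono) auto
    then show ?thesis using assms(4,5) by (simp add: sum.distrib)
  qed
  hence "(\<Sum>x\<in>A. min (a x) (b x)) * (\<Sum>x\<in>A. max (a x) (b x)) \<le> (\<Sum>x\<in>A. min (a x) (b x)) * 2"
    using assms(2,3) by (intro mult_left_mono sum_nonneg) auto
  finally show ?thesis by simp
qed

lemma sum_Pow_split:
  assumes "finite A" "j \<notin> A"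
  shows "(\<Sum>S\<in>Pow (insert j A). g S) = (\<Sum>S\<in>Pow A. g S + g (insert j S))"
proof -
  have disj: "Pow A \<inter> insert j ` Pow A = {}" using assms(2) by auto
  have inj: "inj_on (insert j) (Pow A)"
  proof (rule inj_onI)
    fix x y assume "x \<in> Pow A" "y \<in> Pow A" "insert j x = insert j y"
    moreover have "insert j x - {j} = insert j y - {j}" using calculation by simp
    ultimately show "x = y" using assms(2) by auto
  qed
  have "(\<Sum>S\<in>Pow (insert j A). g S) = (\<Sum>S\<in>Pow A. g S) + (\<Sum>S\<in>insert j ` Pow A. g S)"
    unfolding Pow_insert using assms(1) disj by (intro sum.union_disjoint) auto
  also have "(\<Sum>S\<in>insert j ` Pow A. g S) = (\<Sum>S\<in>Pow A. g (insert j S))"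
    using sum.reindex[OF inj] by simp
  finally show ?thesis by (simp add: sum.distrib)
qed

lemma integrable_bounded_pmf:
  fixes f :: "'b \<Rightarrow> real"
  assumes "\<And>x. \<bar>f x\<bar> \<le> B"
  shows "integrable (measure_pmf M) f"
  by (rule measure_pmf.integrable_const_bound[where B=B]) (use assms in auto)




lemma risk_eq:
  fixes P :: "'a::finite pmf"
  assumes "\<delta> \<ge> 0" "r > 0"
  shows "risk (hamming_metric \<delta>) r n est P
       = (\<Sum>xs\<in>Ls n. wl P xs * (\<delta> powr r * measure_pmf.expectation (est xs) (tv P)))"
  unfolding risk_def expectation_replicate
  by (intro sum.cong refl) (simp add: W_pow assms)

lemma int_tv: "integrable (measure_pmf M) (tv P)"
proof (rule integrable_bounded_pmf[where B=1])
  fix Q show "\<bar>tv P Q\<bar> \<le> 1" using tv_nonneg[of P Q] tv_le1[of P Q] by simp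
qed

lemma E_tv_bounds: "0 \<le> measure_pmf.expectation M (tv P)" "measure_pmf.expectation M (tv P) \<le> 1"
  by (auto intro!: integral_nonneg_AE measure_pmf.integral_le_const int_tv simp: tv_nonneg tv_le1)

lemma risk_bounds:
  fixes P :: "'a::finite pmf"
  assumes "\<delta> \<ge> 0" "r > 0"
  shows "0 \<le> risk (hamming_metric \<delta>) r n est P" "risk (hamming_metric \<delta>) r n est P \<le> \<delta> powr r"
proof -
  show "0 \<le> risk (hamming_metric \<delta>) r n est P"
    unfolding risk_eq[OF assms] by (intro sum_nonneg mult_nonneg_nonneg wl_nonneg E_tv_bounds) auto
  have "(\<Sum>xs\<in>Ls n. wl P xs * (\<delta> powr r * measure_pmf.expectation (est xs) (tv P)))
      \<le> (\<Sum>xs\<in>Ls n. wl P xs * \<delta> powr r)"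
    by (intro sum_mono mult_left_mono wl_nonneg) (auto intro: mult_left_le E_tv_bounds)
  also have "\<dots> = \<delta> powr r" by (simp add: sum_distrib_right[symmetric] sum_wl)
  finally show "risk (hamming_metric \<delta>) r n est P \<le> \<delta> powr r" unfolding risk_eq[OF assms] .
qed

lemma aux_min: "(a::real) \<ge> 0 \<Longrightarrow> b \<ge> 0 \<Longrightarrow> f \<ge> 0 \<Longrightarrow> g \<ge> 0 \<Longrightarrow> a * f + b * g \<ge> min a b * (f + g)"
  by (cases "a \<le> b") (auto simp: min_def distrib_left intro: mult_right_mono add_mono)




lemma lower_fixed_est:
  fixes est :: "'a::finite list \<Rightarrow> 'a pmf pmf"
  assumes card: "CARD('a) \<ge> 2" and big: "real CARD('a) \<le> 32 * real n"
    and delta: "\<delta> > 0" and r: "r \<ge> 1" and n: "n \<ge> 1"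
  shows "\<delta> powr r * sqrt (real (CARD('a) div 2) / (16 * real n)) * (225/1024)
          \<le> (SUP P :: 'a pmf. risk (hamming_metric \<delta>) r n est P)"
proof -
  define k where "k = CARD('a)"
  define m where "m = k div 2"
  define \<epsilon> where "\<epsilon> = sqrt (real m / (16 * real n))"
  have m1: "m \<ge> 1" using card by (simp add: m_def k_def)
  have mk: "2*m \<le> CARD('a)" by (simp add: m_def k_def)
  have m16: "real m \<le> 16 * real n" using big mk by (simp add: k_def)
  have e0: "0 \<le> \<epsilon>" by (simp add: \<epsilon>_def)
  have e1: "\<epsilon> \<le> 1" using m16 n by (simp add: \<epsilon>_def)
  have e2: "\<epsilon>^2 / real m = 1 / (16 * real n)"
    using m1 n by (simp add: \<epsilon>_def)
  have dr: "\<delta> \<ge> 0" "r > 0" using delta r by auto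
  let ?R = "\<lambda>P::'a pmf. risk (hamming_metric \<delta>) r n est P"
  let ?SUP = "(SUP P :: 'a pmf. ?R P)"
  have bdd: "bdd_above (range ?R)"
    by (rule bdd_aboveI[where M="\<delta> powr r"]) (auto simp: risk_bounds(2)[OF dr])
  have supR: "?R P \<le> ?SUP" for P by (rule cSUP_upper[OF _ bdd]) simp
  define F where "F j s xs = measure_pmf.expectation (est xs) (Lj \<epsilon> m j s)" for j s xs
  have intL: "integrable (measure_pmf M) (Lj \<epsilon> m j s)" for M j s
  proof (rule integrable_bounded_pmf[where B=2])
    fix Q show "\<bar>Lj \<epsilon> m j s Q\<bar> \<le> 2" using Lj_bound[OF m1 e0 e1, of j s Q] by simp
  qed
  have Fnn: "F j s xs \<ge> 0" for j s xs
    unfolding F_def using Lj_bound(1)[OF m1 e0 e1] by (intro integral_nonneg_AE) auto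
  have Fpair: "F j True xs + F j False xs \<ge> \<epsilon> / real m" for j xs
  proof -
    have "F j True xs + F j False xs = measure_pmf.expectation (est xs) (\<lambda>Q. Lj \<epsilon> m j True Q + Lj \<epsilon> m j False Q)"
      unfolding F_def using Bochner_Integration.integral_add[OF intL[of _ j True] intL[of _ j False], of "est xs"] by simp
    also have "\<dots> \<ge> \<epsilon> / real m"
      by (intro measure_pmf.integral_ge_const Bochner_Integration.integrable_add intL) (auto intro: Lj_pair[OF m1 e0])
    finally show ?thesis .
  qed
  have lowR: "?R (PS \<epsilon> m S) \<ge> \<delta> powr r * (\<Sum>xs\<in>Ls n. wl (PS \<epsilon> m S) xs * (\<Sum>j<m. F j (j \<in> S) xs))" for S
  proof -
    have "\<delta> powr r * (\<Sum>xs\<in>Ls n. wl (PS \<epsilon> m S) xs * (\<Sum>j<m. F j (j \<in> S) xs))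
        = (\<Sum>xs\<in>Ls n. wl (PS \<epsilon> m S) xs * (\<delta> powr r * (\<Sum>j<m. F j (j \<in> S) xs)))"
      by (simp add: sum_distrib_left mult.left_commute)
    also have "\<dots> \<le> (\<Sum>xs\<in>Ls n. wl (PS \<epsilon> m S) xs * (\<delta> powr r * measure_pmf.expectation (est xs) (tv (PS \<epsilon> m S))))"
    proof (rule sum_mono)
      fix xs
      have "(\<Sum>j<m. F j (j \<in> S) xs) = measure_pmf.expectation (est xs) (\<lambda>Q. \<Sum>j<m. Lj \<epsilon> m j (j \<in> S) Q)"
        unfolding F_def by (rule Bochner_Integration.integral_sum[symmetric]) (rule intL)
      also have "\<dots> \<le> measure_pmf.expectation (est xs) (tv (PS \<epsilon> m S))"
        by (intro Bochner_Integration.integral_mono Bochner_Integration.integrable_sum intL int_tv tv_PS_ge[OF m1 mk e0 e1])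
      finally show "wl (PS \<epsilon> m S) xs * (\<delta> powr r * (\<Sum>j<m. F j (j \<in> S) xs)) \<le> wl (PS \<epsilon> m S) xs * (\<delta> powr r * measure_pmf.expectation (est xs) (tv (PS \<epsilon> m S)))"
        by (intro mult_left_mono) (auto simp: wl_nonneg)
    qed
    also have "\<dots> = ?R (PS \<epsilon> m S)" by (rule risk_eq[OF dr, symmetric])
    finally show ?thesis .
  qed
  define G where "G j S = (\<Sum>xs\<in>Ls n. wl (PS \<epsilon> m S :: 'a pmf) xs * F j (j \<in> S) xs)" for j S
  have pairbound: "G j S + G j (insert j S) \<ge> (\<epsilon> / real m) * (225/512)" if j: "j < m" "j \<notin> S" for j S
  proof -
    let ?a = "wl (PS \<epsilon> m S :: 'a pmf)" and ?b = "wl (PS \<epsilon> m (insert j S) :: 'a pmf)"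
    have "G j S + G j (insert j S) = (\<Sum>xs\<in>Ls n. ?a xs * F j False xs + ?b xs * F j True xs)"
      unfolding G_def using j by (simp add: sum.distrib)
    also have "\<dots> \<ge> (\<Sum>xs\<in>Ls n. min (?a xs) (?b xs) * (\<epsilon> / real m))"
    proof (rule sum_mono)
      fix xs
      have "min (?a xs) (?b xs) * (\<epsilon> / real m) \<le> min (?a xs) (?b xs) * (F j False xs + F j True xs)"
        using Fpair[of j xs] by (intro mult_left_mono) (auto simp: wl_nonneg)
      also have "\<dots> \<le> ?a xs * F j False xs + ?b xs * F j True xs"
        by (rule aux_min) (auto simp: wl_nonneg Fnn)
      finally show "min (?a xs) (?b xs) * (\<epsilon> / real m) \<le> ?a xs * F j False xs + ?b xs * F j True xs" .
    qed
    also have "(\<Sum>xs\<in>Ls n. min (?a xs) (?b xs) * (\<epsilon> / real m)) = (\<Sum>xs\<in>Ls n. min (?a xs) (?b xs)) * (\<epsilon> / real m)"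
      by (rule sum_distrib_right[symmetric])
    finally have s1: "G j S + G j (insert j S) \<ge> (\<Sum>xs\<in>Ls n. min (?a xs) (?b xs)) * (\<epsilon> / real m)" .
    have hel: "(\<Sum>xs\<in>Ls n. min (?a xs) (?b xs)) \<ge> (\<Sum>xs\<in>Ls n. sqrt (?a xs * ?b xs))^2 / 2"
      by (rule hellinger_min) (auto simp: finite_Ls wl_nonneg sum_wl)
    define aff where "aff = (\<Sum>x\<in>(UNIV::'a set). sqrt (pmf (PS \<epsilon> m S :: 'a pmf) x * pmf (PS \<epsilon> m (insert j S) :: 'a pmf) x))"
    have affge: "aff \<ge> 1 - 1 / (16 * real n)"
      using affinity_PS[OF m1 mk e0 e1 j] e2 by (simp add: aff_def)
    have t0: "0 \<le> 1 - 1 / (16 * real n)" using n by (simp add: field_simps)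
    have "(1 - 1 / (16 * real n))^n \<ge> 1 + real n * (- 1 / (16 * real n))"
      using Bernoulli_inequality[of "- 1 / (16 * real n)" n] n by (simp add: field_simps)
    also have "1 + real n * (- 1 / (16 * real n)) = 15/16" using n by (simp add: field_simps)
    finally have b1: "(1 - 1 / (16 * real n))^n \<ge> 15/16" .
    have "aff^n \<ge> (1 - 1 / (16 * real n))^n" by (rule power_mono[OF affge t0])
    with b1 have an: "aff^n \<ge> 15/16" by linarith
    have "(aff^n)^2 \<ge> (15/16)^2" by (rule power_mono[OF an]) simp
    then have "(\<Sum>xs\<in>Ls n. sqrt (?a xs * ?b xs))^2 / 2 \<ge> 225/512"
      by (simp add: affinity_rep aff_def power2_eq_square)
    with hel have "(\<Sum>xs\<in>Ls n. min (?a xs) (?b xs)) \<ge> 225/512" by linarith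
    then have "(\<Sum>xs\<in>Ls n. min (?a xs) (?b xs)) * (\<epsilon> / real m) \<ge> (225/512) * (\<epsilon> / real m)"
      using e0 by (intro mult_right_mono) auto
    with s1 show ?thesis by (simp add: mult.commute)
  qed
  have sumj: "(\<Sum>S\<in>Pow {..<m}. G j S) \<ge> 2^(m-1) * ((\<epsilon> / real m) * (225/512))" if j: "j < m" for j
  proof -
    define A where "A = {..<m} - {j}"
    have A: "finite A" "j \<notin> A" "insert j A = {..<m}" "card A = m - 1" using j by (auto simp: A_def)
    have "(\<Sum>S\<in>Pow {..<m}. G j S) = (\<Sum>S\<in>Pow A. G j S + G j (insert j S))"
      using sum_Pow_split[OF A(1,2), of "G j"] A(3) by simp
    also have "\<dots> \<ge> (\<Sum>S\<in>Pow A. (\<epsilon> / real m) * (225/512))"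
      using A(2) j by (intro sum_mono pairbound) auto
    also have "(\<Sum>S\<in>Pow A. (\<epsilon> / real m) * (225/512)) = 2^(m-1) * ((\<epsilon> / real m) * (225/512))"
      using A by (simp add: card_Pow)
    finally show ?thesis .
  qed
  have total: "(\<Sum>S\<in>Pow {..<m}. ?R (PS \<epsilon> m S)) \<ge> \<delta> powr r * (real m * (2^(m-1) * ((\<epsilon> / real m) * (225/512))))"
  proof -
    have "(\<Sum>S\<in>Pow {..<m}. ?R (PS \<epsilon> m S))
        \<ge> (\<Sum>S\<in>Pow {..<m}. \<delta> powr r * (\<Sum>xs\<in>Ls n. wl (PS \<epsilon> m S) xs * (\<Sum>j<m. F j (j \<in> S) xs)))"
      by (intro sum_mono lowR)
    also have "(\<Sum>S\<in>Pow {..<m}. \<delta> powr r * (\<Sum>xs\<in>Ls n. wl (PS \<epsilon> m S :: 'a pmf) xs * (\<Sum>j<m. F j (j \<in> S) xs)))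
        = \<delta> powr r * (\<Sum>j<m. \<Sum>S\<in>Pow {..<m}. G j S)"
    proof -
      have "(\<Sum>xs\<in>Ls n. wl (PS \<epsilon> m S :: 'a pmf) xs * (\<Sum>j<m. F j (j \<in> S) xs)) = (\<Sum>j<m. G j S)" for S
        unfolding G_def by (simp add: sum_distrib_left) (rule sum.swap)
      then show ?thesis by (simp add: sum_distrib_left[symmetric] sum.swap[of _ "Pow {..<m}"])
    qed
    also have "(\<Sum>j<m. \<Sum>S\<in>Pow {..<m}. G j S) \<ge> (\<Sum>j<m. 2^(m-1) * ((\<epsilon> / real m) * (225/512)))"
      by (intro sum_mono sumj) auto
    then have "\<delta> powr r * (\<Sum>j<m. \<Sum>S\<in>Pow {..<m}. G j S) \<ge> \<delta> powr r * (\<Sum>j<m. 2^(m-1) * ((\<epsilon> / real m) * (225/512)))"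
      by (intro mult_left_mono) auto
    finally show ?thesis by simp
  qed
  have upper: "(\<Sum>S\<in>Pow {..<m}. ?R (PS \<epsilon> m S)) \<le> 2^m * ?SUP"
  proof -
    have "(\<Sum>S\<in>Pow {..<m}. ?R (PS \<epsilon> m S)) \<le> (\<Sum>S\<in>Pow {..<m}. ?SUP)"
      by (intro sum_mono supR)
    also have "\<dots> = 2^m * ?SUP" by (simp add: card_Pow)
    finally show ?thesis .
  qed
  have eq: "real m * (2^(m-1) * ((\<epsilon> / real m) * (225/512))) = 2^m * (\<epsilon> * (225/1024))"
  proof -
    have "(2::real)^m = 2 * 2^(m-1)" using m1 by (cases m) auto
    then show ?thesis using m1 by (simp add: field_simps)
  qed
  have "\<delta> powr r * (2^m * (\<epsilon> * (225/1024))) \<le> (\<Sum>S\<in>Pow {..<m}. ?R (PS \<epsilon> m S))"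
    using total by (simp only: eq)
  then have "\<delta> powr r * (2^m * (\<epsilon> * (225/1024))) \<le> 2^m * ?SUP" using upper by linarith
  then have "2^m * (\<delta> powr r * (\<epsilon> * (225/1024))) \<le> 2^m * ?SUP" by (simp add: mult_ac)
  then have "\<delta> powr r * (\<epsilon> * (225/1024)) \<le> ?SUP" by (rule mult_left_le_imp_le) simp
  then show ?thesis by (simp add: \<epsilon>_def m_def k_def mult.assoc)
qed




lemma cr_le: assumes "r \<ge> 1" shows "3 * ln 2 / 2 powr (r + 12) \<le> 3 / (8192::real)"
proof -
  have "(2::real) powr 13 \<le> 2 powr (r + 12)" using assms by (intro powr_mono) auto
  moreover have "(2::real) powr 13 = 8192"
    using powr_realpow[of 2 13] by simp
  ultimately have p: "8192 \<le> (2::real) powr (r + 12)" by simp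
  have l: "ln 2 \<le> (1::real)" using ln_2_less_1 by simp
  have "3 * ln 2 / 2 powr (r + 12) \<le> 3 / 2 powr (r + 12)"
    using l by (intro divide_right_mono) auto
  also have "\<dots> \<le> 3 / 8192" by (rule divide_left_mono) (use p in auto)
  finally show ?thesis by simp
qed

lemma sqrt_bound:
  assumes "k \<ge> 2" "n \<ge> 1"
  shows "sqrt ((real k - 1) / real n) \<le> 8 * sqrt (real (k div 2) / (16 * real n))"
proof -
  have "real k - 1 \<le> 2 * real (k div 2)" by linarith
  then have "(real k - 1) / real n \<le> (4 * real (k div 2)) / real n"
    by (intro divide_right_mono) auto
  moreover have "64 * (real (k div 2) / (16 * real n)) = (4 * real (k div 2)) / real n" by simp
  ultimately have "(real k - 1) / real n \<le> 64 * (real (k div 2) / (16 * real n))" by simp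
  then have "sqrt ((real k - 1) / real n) \<le> sqrt (64 * (real (k div 2) / (16 * real n)))"
    by (rule real_sqrt_le_mono)
  also have "\<dots> = sqrt 64 * sqrt (real (k div 2) / (16 * real n))"
    by (rule real_sqrt_mult)
  also have "sqrt 64 = (8::real)" by (rule real_sqrt_unique) auto
  finally show ?thesis .
qed

theorem mainTheorem8:
  fixes \<delta> r :: real and n :: nat
  assumes card: "CARD('a::finite) \<ge> 2"
    and delta: "\<delta> > 0" and r: "r \<ge> 1" and n: "n \<ge> 1"
  shows "(\<forall>P :: 'a pmf.
            measure_pmf.expectation (replicate_pmf n P)
              (\<lambda>xs. wasserstein (hamming_metric \<delta>) r P (empirical xs) powr r)
            \<le> \<delta> powr r * sqrt ((real CARD('a) - 1) / real n))
       \<and> (real CARD('a) \<le> 32 * real n \<longrightarrow>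
            (INF est :: 'a list \<Rightarrow> 'a pmf pmf. SUP P :: 'a pmf. risk (hamming_metric \<delta>) r n est P)
            \<ge> (3 * ln 2 / 2 powr (r + 12)) * \<delta> powr r * sqrt ((real CARD('a) - 1) / real n))"
proof (intro conjI allI impI)
  fix P :: "'a pmf"
  show "measure_pmf.expectation (replicate_pmf n P)
              (\<lambda>xs. wasserstein (hamming_metric \<delta>) r P (empirical xs) powr r)
            \<le> \<delta> powr r * sqrt ((real CARD('a) - 1) / real n)"
    by (rule part1[OF card delta r n])
next
  assume big: "real CARD('a) \<le> 32 * real n"
  let ?c = "3 * ln 2 / 2 powr (r + 12)"
  let ?s = "sqrt (real (CARD('a) div 2) / (16 * real n))"
  have dp: "\<delta> powr r \<ge> 0" by simp
  have c0: "?c \<ge> 0" by simp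
  have "?c * \<delta> powr r * sqrt ((real CARD('a) - 1) / real n) \<le> ?c * \<delta> powr r * (8 * ?s)"
    using sqrt_bound[OF card n] c0 dp by (intro mult_left_mono) auto
  also have "\<dots> \<le> (3 / 8192) * \<delta> powr r * (8 * ?s)"
    using cr_le[OF r] dp by (intro mult_right_mono) auto
  also have "\<dots> \<le> \<delta> powr r * ?s * (225/1024)"
    using dp by (simp add: mult_ac)
  finally have key: "?c * \<delta> powr r * sqrt ((real CARD('a) - 1) / real n) \<le> \<delta> powr r * ?s * (225/1024)" .
  show "?c * \<delta> powr r * sqrt ((real CARD('a) - 1) / real n)
      \<le> (INF est :: 'a list \<Rightarrow> 'a pmf pmf. SUP P :: 'a pmf. risk (hamming_metric \<delta>) r n est P)"
  proof (rule cINF_greatest)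
    fix est :: "'a list \<Rightarrow> 'a pmf pmf"
    show "?c * \<delta> powr r * sqrt ((real CARD('a) - 1) / real n) \<le> (SUP P :: 'a pmf. risk (hamming_metric \<delta>) r n est P)"
      using key lower_fixed_est[OF card big delta r n, of est] by linarith
  qed simp
qed


end
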